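(* Let $B>0$ and $c>0$, and set $\epsilon^*(B)=\dfrac{c\,e^{-c/2}}{1+B}$. Let $\beta$ be Lipschitz on $[0,1]$ with $\|\beta\|_\infty\le B$, let $k=\mathcal{K}(\beta)$ be the exact backstepping kernel, and let $\hat k\in C^0[0,1]$ satisfy $|k(x)-\hat k(x)|<\epsilon$ for all $x\in[0,1]$, where $\epsilon\in(0,\epsilon^* )$. Put $\tilde k=k-\hat k$ and $\delta(x)=-\tilde k(x)+\int_0^x\beta(x-y)\tilde k(y)\,dy$. Then along solutions $\hat w$ of $$\hat w_t(x,t)=\hat w_x(x,t)+\delta(x)\hat w(0,t),\quad x\in[0,1],\qquad \hat w(1,t)=0,$$ the functional $V(t)=\int_0^1 e^{cx}\hat w^2(x,t)\,dx$ satisfies $V(t)\le V(0)e^{-c^*t}$ for all $t\ge0$, where $$c^* = c-\frac{e^c}{c}\epsilon^2(1+B)^2>0.$$ Moreover, the required accuracy $\epsilon^*$ is maximized over $c>0$ at $c=2$, where $\epsilon^*(B)=\dfrac{2}{e(1+B)}$.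
   Context: The backstepping kernel operator $\mathcal{K}$ maps $\beta\in C^0[0,1]$ to the solution $k$ of $k(x)=-\beta(x)+\int_0^x\beta(x-y)k(y)\,dy$, $x\in[0,1]$. $\|\cdot\|_\infty$ is the supremum norm on $[0,1]$. (The target system arises from the plant $u_t=u_x+\beta(x)u(0,t)$, $u(1,t)=\int_0^1\hat k(1-y)u(y,t)dy$ via $\hat w=u-\int_0^x\hat k(x-y)u(y)dy$.) *)

theory Defs
  imports "HOL-Analysis.Analysis"
begin

definition backstepping_kernel :: "(real \<Rightarrow> real) \<Rightarrow> (real \<Rightarrow> real) \<Rightarrow> bool" where
  "backstepping_kernel \<beta> k \<longleftrightarrow> continuous_on {0..1} k \<and>
     (\<forall>x\<in>{0..1}. k x = - \<beta> x + integral {0..x} (\<lambda>y. \<beta> (x - y) * k y))"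

definition eps_star :: "real \<Rightarrow> real \<Rightarrow> real" where
  "eps_star c B = c * exp (- c / 2) / (1 + B)"

definition classical_solution :: "(real \<Rightarrow> real) \<Rightarrow> (real \<Rightarrow> real \<Rightarrow> real) \<Rightarrow> bool" where
  "classical_solution \<delta> w \<longleftrightarrow>
     continuous_on ({0..1} \<times> {0..}) (\<lambda>(x,t). w x t) \<and>
     (\<exists>wx wt. continuous_on ({0..1} \<times> {0..}) (\<lambda>(x,t). wx x t) \<and>
              continuous_on ({0..1} \<times> {0..}) (\<lambda>(x,t). wt x t) \<and>
              (\<forall>x\<in>{0..1}. \<forall>t\<in>{0..}.
                 ((\<lambda>y. w y t) has_real_derivative wx x t) (at x within {0..1}) \<and>
                 ((\<lambda>s. w x s) has_real_derivative wt x t) (at t within {0..}) \<and>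
                 wt x t = wx x t + \<delta> x * w 0 t)) \<and>
     (\<forall>t\<in>{0..}. w 1 t = 0)"

end

theory Submission
  imports Defs
begin

lemma cont_swap:
  assumes "continuous_on (A \<times> B) (\<lambda>(x,t). F x t)"
  shows "continuous_on (B \<times> A) (\<lambda>(t,x). F x t)"
proof -
  have "continuous_on (B \<times> A) ((\<lambda>(x,t). F x t) \<circ> (\<lambda>(t,x). (x,t)))"
  proof (rule continuous_on_compose)
    show "continuous_on (B \<times> A) (\<lambda>(t, x). (x, t))" by (auto intro!: continuous_intros simp: case_prod_beta)
    have "(\<lambda>(t, x). (x, t)) ` (B \<times> A) \<subseteq> A \<times> B" by auto
    then show "continuous_on ((\<lambda>(t, x). (x, t)) ` (B \<times> A)) (\<lambda>(x, t). F x t)"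
      by (rule continuous_on_subset[OF assms])
  qed
  then show ?thesis by (simp add: o_def case_prod_beta)
qed

lemma cont_slice:
  assumes "continuous_on (A \<times> B) (\<lambda>(x,t). F x t)" "t \<in> B"
  shows "continuous_on A (\<lambda>x. F x t)"
proof -
  have "continuous_on A ((\<lambda>(x,t). F x t) \<circ> (\<lambda>x. (x,t)))"
    by (rule continuous_on_compose) (auto intro!: continuous_intros intro: continuous_on_subset[OF assms(1)] simp: assms(2))
  then show ?thesis by (simp add: o_def)
qed

lemma eps_part:
  fixes B c :: real assumes "B > 0" "c > 0"
  shows "(\<forall>c'>0. eps_star c' B \<le> eps_star 2 B) \<and> eps_star 2 B = 2 / (exp 1 * (1 + B))"
proof
  show "\<forall>c'>0. eps_star c' B \<le> eps_star 2 B"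
  proof (intro allI impI)
    fix c' :: real assume c': "c' > 0"
    have "1 + (c'/2 - 1) \<le> exp (c'/2 - 1)" by (rule exp_ge_add_one_self)
    then have "c' * exp (- c'/2) \<le> 2 * exp (c'/2 - 1) * exp (- c'/2)" by simp
    also have "\<dots> = 2 * exp (-1)" by (simp flip: exp_add)
    finally have "c' * exp (- c'/2) \<le> 2 * exp (- 2 / 2)" by simp
    then show "eps_star c' B \<le> eps_star 2 B" unfolding eps_star_def
      using assms by (intro divide_right_mono) auto
  qed
  show "eps_star 2 B = 2 / (exp 1 * (1 + B))" unfolding eps_star_def
    by (simp add: exp_minus field_simps)
qed

lemma cstar_pos:
  fixes B c \<epsilon> :: real assumes "B > 0" "c > 0" "0 < \<epsilon>" "\<epsilon> < eps_star c B"
  shows "c - exp c / c * \<epsilon>\<^sup>2 * (1 + B)\<^sup>2 > 0"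
proof -
  have "\<epsilon> * (1 + B) < c * exp (- c / 2)" using assms unfolding eps_star_def
    by (simp add: field_simps)
  then have "(\<epsilon> * (1 + B))^2 < (c * exp (- c / 2))^2"
    using assms by (intro power_strict_mono) auto
  also have "\<dots> = c^2 * exp (-c)" by (simp add: power2_eq_square flip: exp_add)
  finally have "exp c * (\<epsilon> * (1 + B))^2 < exp c * (c^2 * exp (-c))" by simp
  also have "\<dots> = c^2" by (simp flip: exp_add)
  finally have "exp c * (\<epsilon> * (1 + B))^2 < c * c" by (simp add: power2_eq_square)
  then have "exp c * (\<epsilon>\<^sup>2 * (1 + B)\<^sup>2) < c * c" by (simp only: power_mult_distrib)
  then have "exp c / c * \<epsilon>\<^sup>2 * (1 + B)\<^sup>2 < c" using assms
    by (simp add: field_simps)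
  then show ?thesis by simp
qed

lemma exp_int: "c > 0 \<Longrightarrow> ((\<lambda>x::real. exp (c * x)) has_integral ((exp c - 1) / c)) {0..1}"
proof -
  assume c: "c > 0"
  have "((\<lambda>x. exp (c * x)) has_integral ((\<lambda>x. exp (c * x) / c) 1 - (\<lambda>x. exp (c * x) / c) 0)) {0..1}"
    by (rule fundamental_theorem_of_calculus)
      (use c in \<open>auto intro!: derivative_eq_intros simp flip: has_real_derivative_iff_has_vector_derivative\<close>)
  then show ?thesis by (simp add: diff_divide_distrib)
qed

lemma deriv_bound:
  fixes \<delta> :: "real \<Rightarrow> real" and w wx wt :: "real \<Rightarrow> real \<Rightarrow> real" and c D t :: real
  assumes c: "c > 0" and D: "D > 0" and dB: "\<forall>x\<in>{0..1}. \<bar>\<delta> x\<bar> \<le> D"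
    and cw: "continuous_on ({0..1} \<times> {0..}) (\<lambda>(x,t). w x t)"
    and cwx: "continuous_on ({0..1} \<times> {0..}) (\<lambda>(x,t). wx x t)"
    and cwt: "continuous_on ({0..1} \<times> {0..}) (\<lambda>(x,t). wt x t)"
    and dx: "\<forall>x\<in>{0..1}. ((\<lambda>y. w y t) has_real_derivative wx x t) (at x within {0..1})"
    and pde: "\<forall>x\<in>{0..1}. wt x t = wx x t + \<delta> x * w 0 t"
    and bc: "w 1 t = 0" and t: "t \<ge> 0"
  shows "integral {0..1} (\<lambda>x. exp (c * x) * (2 * w x t * wt x t))
     \<le> - (c - exp c / c * D\<^sup>2) * integral {0..1} (\<lambda>x. exp (c * x) * (w x t)\<^sup>2)"
proof -
  define W where "W x = w x t" for x
  define Wx where "Wx x = wx x t" for x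
  have Weq: "W = (\<lambda>y. w y t)" by (rule ext) (simp add: W_def)
  define g where "g x = wt x t - wx x t" for x
  define w0 where "w0 = w 0 t"
  define V where "V = integral {0..1} (\<lambda>x. exp (c * x) * (W x)\<^sup>2)"
  have tt: "t \<in> {0..}" using t by simp
  have cW: "continuous_on {0..1} W" unfolding W_def by (rule cont_slice[OF cw tt])
  have cWx: "continuous_on {0..1} Wx" unfolding Wx_def by (rule cont_slice[OF cwx tt])
  have cWt: "continuous_on {0..1} (\<lambda>x. wt x t)" by (rule cont_slice[OF cwt tt])
  have cg: "continuous_on {0..1} g" unfolding g_def
    by (intro continuous_intros cWt cWx[unfolded Wx_def])
  have gb: "\<bar>g x\<bar> \<le> D * \<bar>w0\<bar>" if "x \<in> {0..1}" for x
  proof -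
    have "g x = \<delta> x * w0" using pde that by (simp add: g_def w0_def)
    then have "\<bar>g x\<bar> = \<bar>\<delta> x\<bar> * \<bar>w0\<bar>" by (simp add: abs_mult)
    also have "\<dots> \<le> D * \<bar>w0\<bar>" using dB that by (intro mult_right_mono) auto
    finally show ?thesis .
  qed
  have split: "exp (c * x) * (2 * w x t * wt x t) =
      exp (c * x) * (2 * W x * Wx x) + exp (c * x) * (2 * W x * g x)" for x
    by (simp add: W_def Wx_def g_def algebra_simps)
  have i1: "(\<lambda>x. exp (c * x) * (2 * W x * Wx x)) integrable_on {0..1}"
    by (intro integrable_continuous_interval continuous_intros cW cWx)
  have i2: "(\<lambda>x. exp (c * x) * (2 * W x * g x)) integrable_on {0..1}"
    by (intro integrable_continuous_interval continuous_intros cW cg)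
  have iV: "(\<lambda>x. exp (c * x) * (W x)\<^sup>2) integrable_on {0..1}"
    by (intro integrable_continuous_interval continuous_intros cW)
  have I: "integral {0..1} (\<lambda>x. exp (c * x) * (2 * w x t * wt x t)) =
      integral {0..1} (\<lambda>x. exp (c * x) * (2 * W x * Wx x)) + integral {0..1} (\<lambda>x. exp (c * x) * (2 * W x * g x))"
    unfolding split by (rule integral_add[OF i1 i2])
  have ftc: "((\<lambda>x. c * exp (c * x) * (W x)\<^sup>2 + exp (c * x) * (2 * W x * Wx x)) has_integral
      ((\<lambda>x. exp (c * x) * (W x)\<^sup>2) 1 - (\<lambda>x. exp (c * x) * (W x)\<^sup>2) 0)) {0..1}"
  proof (rule fundamental_theorem_of_calculus)
    fix x :: real assume x: "x \<in> {0..1}"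
    have "(W has_real_derivative Wx x) (at x within {0..1})" using dx x by (simp add: Weq Wx_def)
    then have "((\<lambda>x. exp (c * x) * (W x)\<^sup>2) has_real_derivative
        c * exp (c * x) * (W x)\<^sup>2 + exp (c * x) * (2 * W x * Wx x)) (at x within {0..1})"
      by (auto intro!: derivative_eq_intros simp: power2_eq_square algebra_simps)
    then show "((\<lambda>x. exp (c * x) * (W x)\<^sup>2) has_vector_derivative
        c * exp (c * x) * (W x)\<^sup>2 + exp (c * x) * (2 * W x * Wx x)) (at x within {0..1})"
      by (simp add: has_real_derivative_iff_has_vector_derivative)
  qed simp
  have "integral {0..1} (\<lambda>x. c * exp (c * x) * (W x)\<^sup>2 + exp (c * x) * (2 * W x * Wx x)) = - w0\<^sup>2"
    using integral_unique[OF ftc] bc by (simp add: W_def w0_def)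
  moreover have "integral {0..1} (\<lambda>x. c * exp (c * x) * (W x)\<^sup>2 + exp (c * x) * (2 * W x * Wx x))
      = c * V + integral {0..1} (\<lambda>x. exp (c * x) * (2 * W x * Wx x))"
  proof -
    have "integral {0..1} (\<lambda>x. c * exp (c * x) * (W x)\<^sup>2 + exp (c * x) * (2 * W x * Wx x))
       = integral {0..1} (\<lambda>x. c * (exp (c * x) * (W x)\<^sup>2)) + integral {0..1} (\<lambda>x. exp (c * x) * (2 * W x * Wx x))"
      by (subst integral_add[symmetric])
        (auto intro!: integrable_continuous_interval continuous_intros cW cWx simp: mult.assoc)
    then show ?thesis by (simp add: V_def)
  qed
  ultimately have I1: "integral {0..1} (\<lambda>x. exp (c * x) * (2 * W x * Wx x)) = - w0\<^sup>2 - c * V" by simp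
  \<comment> \<open>Young inequality\<close>
  define lam where "lam = c / (D\<^sup>2 * exp c)"
  have lpos: "lam > 0" using c D by (simp add: lam_def)
  have young: "exp (c * x) * (2 * W x * g x) \<le> lam * (D\<^sup>2 * w0\<^sup>2) * exp (c * x) + (1 / lam) * (exp (c * x) * (W x)\<^sup>2)"
    if x: "x \<in> {0..1}" for x
  proof -
    have "0 \<le> (lam * g x - W x)\<^sup>2" by simp
    then have "2 * W x * g x * lam \<le> lam\<^sup>2 * (g x)\<^sup>2 + (W x)\<^sup>2" by (simp add: power2_eq_square algebra_simps)
    then have "2 * W x * g x \<le> lam * (g x)\<^sup>2 + (1/lam) * (W x)\<^sup>2" using lpos
      by (simp add: field_simps power2_eq_square)
    also have "(g x)\<^sup>2 \<le> (D * \<bar>w0\<bar>)\<^sup>2" using gb[OF x]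
      by (metis abs_ge_zero power2_abs power_mono)
    then have "lam * (g x)\<^sup>2 \<le> lam * (D\<^sup>2 * w0\<^sup>2)" using lpos by (simp add: power_mult_distrib)
    finally have "2 * W x * g x \<le> lam * (D\<^sup>2 * w0\<^sup>2) + (1/lam) * (W x)\<^sup>2" by simp
    then have "exp (c * x) * (2 * W x * g x) \<le> exp (c * x) * (lam * (D\<^sup>2 * w0\<^sup>2) + (1/lam) * (W x)\<^sup>2)"
      by (intro mult_left_mono) auto
    then show ?thesis by (simp add: algebra_simps)
  qed
  have "integral {0..1} (\<lambda>x. exp (c * x) * (2 * W x * g x)) \<le>
      integral {0..1} (\<lambda>x. lam * (D\<^sup>2 * w0\<^sup>2) * exp (c * x) + (1 / lam) * (exp (c * x) * (W x)\<^sup>2))"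
    by (rule integral_le[OF i2], intro integrable_continuous_interval continuous_intros cW,
        rule young, simp)
  also have "\<dots> = lam * (D\<^sup>2 * w0\<^sup>2) * ((exp c - 1) / c) + (1 / lam) * V"
  proof -
    have "((\<lambda>x. lam * (D\<^sup>2 * w0\<^sup>2) * exp (c * x) + (1 / lam) * (exp (c * x) * (W x)\<^sup>2)) has_integral
       lam * (D\<^sup>2 * w0\<^sup>2) * ((exp c - 1) / c) + (1 / lam) * V) {0..1}"
      unfolding V_def
      by (intro has_integral_add has_integral_mult_right exp_int c integrable_integral iV)
    then show ?thesis by (rule integral_unique)
  qed
  finally have J: "integral {0..1} (\<lambda>x. exp (c * x) * (2 * W x * g x)) \<le> lam * (D\<^sup>2 * w0\<^sup>2) * ((exp c - 1) / c) + (1 / lam) * V" .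
  have "lam * (D\<^sup>2 * w0\<^sup>2) * ((exp c - 1) / c) = w0\<^sup>2 * ((exp c - 1) / exp c)"
    using c D by (simp add: lam_def field_simps)
  also have "\<dots> \<le> w0\<^sup>2" by (intro mult_left_le) auto
  finally have J1: "lam * (D\<^sup>2 * w0\<^sup>2) * ((exp c - 1) / c) \<le> w0\<^sup>2" .
  have J2: "(1 / lam) * V = exp c / c * D\<^sup>2 * V" by (simp add: lam_def)
  have I2: "integral {0..1} (\<lambda>x. exp (c * x) * (2 * W x * g x)) \<le> w0\<^sup>2 + exp c / c * D\<^sup>2 * V"
    using J J1 J2 by linarith
  show ?thesis unfolding I I1 using I2 by (simp add: V_def W_def algebra_simps)
qed

lemma decay:
  fixes \<delta> :: "real \<Rightarrow> real" and w :: "real \<Rightarrow> real \<Rightarrow> real" and c D :: real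
  assumes c: "c > 0" and D: "D > 0" and dB: "\<forall>x\<in>{0..1}. \<bar>\<delta> x\<bar> \<le> D"
    and sol: "classical_solution \<delta> w"
  shows "\<forall>t\<ge>0. integral {0..1} (\<lambda>x. exp (c * x) * (w x t)\<^sup>2)
                 \<le> integral {0..1} (\<lambda>x. exp (c * x) * (w x 0)\<^sup>2)
                   * exp (- (c - exp c / c * D\<^sup>2) * t)"
proof -
  have cw: "continuous_on ({0..1} \<times> {0..}) (\<lambda>(x,t). w x t)" and bc: "\<forall>t\<in>{0..}. w 1 t = 0"
    using sol unfolding classical_solution_def by auto
  from sol obtain wx wt where
    cwx: "continuous_on ({0..1} \<times> {0..}) (\<lambda>(x,t). wx x t)" and
    cwt: "continuous_on ({0..1} \<times> {0..}) (\<lambda>(x,t). wt x t)" and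
    ders: "\<forall>x\<in>{0..1}. \<forall>t\<in>{0..}.
                 ((\<lambda>y. w y t) has_real_derivative wx x t) (at x within {0..1}) \<and>
                 ((\<lambda>s. w x s) has_real_derivative wt x t) (at t within {0..}) \<and>
                 wt x t = wx x t + \<delta> x * w 0 t"
    unfolding classical_solution_def by blast
  define V where "V s = integral {0..1} (\<lambda>x. exp (c * x) * (w x s)\<^sup>2)" for s
  define V' where "V' s = integral {0..1} (\<lambda>x. exp (c * x) * (2 * w x s * wt x s))" for s
  define cs where "cs = c - exp c / c * D\<^sup>2"
  have cw': "continuous_on ({0..1} \<times> {0..}) (\<lambda>p. w (fst p) (snd p))"
    using cw by (simp add: case_prod_beta)
  have cwt': "continuous_on ({0..1} \<times> {0..}) (\<lambda>p. wt (fst p) (snd p))"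
    using cwt by (simp add: case_prod_beta)
  have cprod: "continuous_on ({0..1} \<times> {0..}) (\<lambda>(x,s). exp (c * x) * (2 * w x s * wt x s))"
  proof -
    have "continuous_on ({0..1} \<times> {0..}) (\<lambda>p. exp (c * fst p) * (2 * w (fst p) (snd p) * wt (fst p) (snd p)))"
      by (intro continuous_intros cw' cwt')
    then show ?thesis by (simp add: case_prod_beta)
  qed
  have dV: "(V has_real_derivative V' s) (at s within {0..})" if s: "s \<ge> 0" for s
  proof -
    have "((\<lambda>s. integral (cbox 0 1) ((\<lambda>s x. exp (c * x) * (w x s)\<^sup>2) s)) has_field_derivative
        integral (cbox 0 1) ((\<lambda>s x. exp (c * x) * (2 * w x s * wt x s)) s)) (at s within {0..})"
    proof (rule leibniz_rule_field_derivative)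
      fix s x :: real assume a: "s \<in> {0..}" "x \<in> cbox 0 1"
      then have "x \<in> {0..1}" by simp
      from ders[rule_format, OF this a(1)]
      have "((\<lambda>s. w x s) has_real_derivative wt x s) (at s within {0..})" by blast
      then show "((\<lambda>s. exp (c * x) * (w x s)\<^sup>2) has_field_derivative exp (c * x) * (2 * w x s * wt x s)) (at s within {0..})"
        by (auto intro!: derivative_eq_intros)
    next
      fix s :: real assume "s \<in> {0..}"
      then have "continuous_on {0..1} (\<lambda>x. w x s)" by (intro cont_slice[OF cw])
      then show "(\<lambda>x. exp (c * x) * (w x s)\<^sup>2) integrable_on cbox 0 1"
        by (auto intro!: integrable_continuous_interval continuous_intros)
    next
      show "continuous_on ({0..} \<times> cbox 0 1) (\<lambda>(s, x). exp (c * x) * (2 * w x s * wt x s))"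
        using cont_swap[OF cprod] by simp
    qed (use s in auto)
    moreover have "V = (\<lambda>s. integral {0..1} (\<lambda>x. exp (c * x) * (w x s)\<^sup>2))"
      by (rule ext) (simp add: V_def)
    ultimately show ?thesis by (simp add: V'_def)
  qed
  have negd: "V' s \<le> - cs * V s" if s: "s \<ge> 0" for s
    unfolding V_def V'_def cs_def
    by (rule deriv_bound[OF c D dB cw cwx cwt]) (use s ders bc in auto)
  define h where "h s = V s * exp (cs * s)" for s
  have dh: "(h has_real_derivative (V' s * exp (cs * s) + V s * (cs * exp (cs * s)))) (at s within {0..})"
    if s: "s \<ge> 0" for s
    unfolding h_def by (auto intro!: derivative_eq_intros dV s)
  have dhneg: "V' s * exp (cs * s) + V s * (cs * exp (cs * s)) \<le> 0" if s: "s \<ge> 0" for s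
  proof -
    have "V' s * exp (cs * s) + V s * (cs * exp (cs * s)) = exp (cs * s) * (V' s + cs * V s)"
      by (simp add: algebra_simps)
    also have "\<dots> \<le> 0" using negd[OF s] by (intro mult_nonneg_nonpos) auto
    finally show ?thesis .
  qed
  have hcont: "continuous_on {0..} h"
    using dh by (auto simp: continuous_on_eq_continuous_within intro: DERIV_continuous)
  have hdec: "h t \<le> h 0" if t: "t \<ge> 0" for t
  proof (cases "t = 0")
    case False
    then have tp: "0 < t" using t by simp
    have "\<exists>l z. 0 < z \<and> z < t \<and> DERIV h z :> l \<and> h t - h 0 = (t - 0) * l"
    proof (rule MVT[OF tp])
      show "continuous_on {0..t} h" by (rule continuous_on_subset[OF hcont]) auto
    next
      fix x :: real assume x: "0 < x" "x < t"
      have "interior {0::real..} = {0<..}" by simp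
      then have "at x within {0..} = at x" using x by (intro at_within_interior) auto
      then show "h differentiable at x" using dh[of x] x
        by (auto simp: real_differentiable_def)
    qed
    then obtain l z where z: "0 < z" "z < t" "DERIV h z :> l" "h t - h 0 = (t - 0) * l" by blast
    have "interior {0::real..} = {0<..}" by simp
    then have "at z within {0..} = at z" using z by (intro at_within_interior) auto
    then have "DERIV h z :> (V' z * exp (cs * z) + V z * (cs * exp (cs * z)))" using dh[of z] z by simp
    then have "l = V' z * exp (cs * z) + V z * (cs * exp (cs * z))" using z(3) DERIV_unique by metis
    then have "l \<le> 0" using dhneg[of z] z by simp
    then have "t * l \<le> 0" using tp by (simp add: mult_nonneg_nonpos)
    then show ?thesis using z(4) by simp
  qed simp
  show ?thesis
  proof (intro allI impI)
    fix t :: real assume t: "t \<ge> 0"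
    have "V t * exp (cs * t) \<le> V 0" using hdec[OF t] by (simp add: h_def)
    then have "V t * exp (cs * t) * exp (- cs * t) \<le> V 0 * exp (- cs * t)"
      by (intro mult_right_mono) auto
    then have "V t \<le> V 0 * exp (- cs * t)" by (simp add: mult.assoc flip: exp_add)
    then show "integral {0..1} (\<lambda>x. exp (c * x) * (w x t)\<^sup>2)
                 \<le> integral {0..1} (\<lambda>x. exp (c * x) * (w x 0)\<^sup>2)
                   * exp (- (c - exp c / c * D\<^sup>2) * t)" by (simp add: V_def cs_def)
  qed
qed

theorem lemma2:
  fixes B c \<epsilon> :: real and \<beta> k k_hat :: "real \<Rightarrow> real" and w :: "real \<Rightarrow> real \<Rightarrow> real"
  assumes "B > 0" and "c > 0"
    and "\<exists>L. L-lipschitz_on {0..1} \<beta>"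
    and "\<forall>x\<in>{0..1}. \<bar>\<beta> x\<bar> \<le> B"
    and "backstepping_kernel \<beta> k"
    and "continuous_on {0..1} k_hat"
    and "\<forall>x\<in>{0..1}. \<bar>k x - k_hat x\<bar> < \<epsilon>"
    and "0 < \<epsilon>" and "\<epsilon> < eps_star c B"
    and "classical_solution
           (\<lambda>x. - (k x - k_hat x) + integral {0..x} (\<lambda>y. \<beta> (x - y) * (k y - k_hat y))) w"
  shows "c - exp c / c * \<epsilon>\<^sup>2 * (1 + B)\<^sup>2 > 0
       \<and> (\<forall>t\<ge>0. integral {0..1} (\<lambda>x. exp (c * x) * (w x t)\<^sup>2)
                 \<le> integral {0..1} (\<lambda>x. exp (c * x) * (w x 0)\<^sup>2)
                   * exp (- (c - exp c / c * \<epsilon>\<^sup>2 * (1 + B)\<^sup>2) * t))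
       \<and> (\<forall>c'>0. eps_star c' B \<le> eps_star 2 B)
       \<and> eps_star 2 B = 2 / (exp 1 * (1 + B))"
proof -
  note a = assms
  define D where "D = \<epsilon> * (1 + B)"
  have Dp: "D > 0" using a by (simp add: D_def)
  have dB: "\<forall>x\<in>{0..1}. \<bar>- (k x - k_hat x) + integral {0..x} (\<lambda>y. \<beta> (x - y) * (k y - k_hat y))\<bar> \<le> D"
  proof
    fix x :: real assume x: "x \<in> {0..1}"
    have ib: "\<bar>integral {0..x} (\<lambda>y. \<beta> (x - y) * (k y - k_hat y))\<bar> \<le> B * \<epsilon> * x"
    proof (cases "(\<lambda>y. \<beta> (x - y) * (k y - k_hat y)) integrable_on {0..x}")
      case True
      have h0: "0 \<le> B * \<epsilon>" using a by simp
      have hI: "((\<lambda>y. \<beta> (x - y) * (k y - k_hat y)) has_integral integral {0..x} (\<lambda>y. \<beta> (x - y) * (k y - k_hat y))) {0..x}"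
          using True by (rule integrable_integral)
      have hb: "norm (\<beta> (x - y) * (k y - k_hat y)) \<le> B * \<epsilon>" if y: "y \<in> {0..x} - {}" for y
      proof -
        have "x - y \<in> {0..1}" "y \<in> {0..1}" using x y by auto
        then have "\<bar>\<beta> (x - y)\<bar> \<le> B" "\<bar>k y - k_hat y\<bar> \<le> \<epsilon>" using a(4) a(7) by (auto simp del: atLeastAtMost_iff intro: less_imp_le)
        then have "\<bar>\<beta> (x - y)\<bar> * \<bar>k y - k_hat y\<bar> \<le> B * \<epsilon>" by (intro mult_mono) auto
        then show "norm (\<beta> (x - y) * (k y - k_hat y)) \<le> B * \<epsilon>" by (simp add: abs_mult)
      qed
      note has_integral_bound_real[OF h0 finite.emptyI hI hb]
      then show ?thesis using x by simp
    next
      case False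
      then show ?thesis using x a by (simp add: not_integrable_integral)
    qed
    have "B * \<epsilon> * x \<le> B * \<epsilon>" using x a by (simp add: mult_left_le)
    moreover have "\<bar>k x - k_hat x\<bar> \<le> \<epsilon>" using a(7) x by (auto simp del: atLeastAtMost_iff intro: less_imp_le)
    ultimately show "\<bar>- (k x - k_hat x) + integral {0..x} (\<lambda>y. \<beta> (x - y) * (k y - k_hat y))\<bar> \<le> D"
      using ib by (simp add: D_def algebra_simps)
  qed
  note dec = decay[OF a(2) Dp dB a(10)]
  have D2: "exp c / c * D\<^sup>2 = exp c / c * \<epsilon>\<^sup>2 * (1 + B)\<^sup>2" by (simp add: D_def power_mult_distrib)
  note dec' = dec[unfolded D2]
  show ?thesis
    using cstar_pos[OF a(1) a(2) a(8) a(9)] eps_part[OF a(1) a(2)] dec' by blast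
qed

end
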